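(* Let $G=\langle S_k\mid K\rangle$ be a finitely generated semigroup as described in the context, let $\mathcal{A}$ be a finite alphabet and let $X\subseteq\mathcal{A}^G$ be a tree shift. If $K$ is primitive, then for all $1\le i,j\le k$, \[ \limsup_{m\to\infty}\frac{\log p^{(s_i)}_m}{|\bar{\Delta}^{(s_i)}_m|}=\limsup_{m\to\infty}\frac{\log p^{(s_j)}_m}{|\bar{\Delta}^{(s_j)}_m|}, \] i.e. all the stem entropies $h^{(s_i)}(X)$, $1\le i\le k$, coincide (the stem entropy of $X$ exists).
   Context: Let $K$ be a $k\times k$ matrix with entries in $\{0,1\}$ indexed by $S_k=\{s_1,\dots,s_k\}$, and let $G=\langle S_k\mid K\rangle$ be the semigroup generated by $S_k$ subject to the relations $s_is_j=1_G$ if and only if $K(s_i,s_j)=0$ ($1_G$ the identity). Every $g\in G$ has a unique minimal representation $g=g_1g_2\cdots g_n$ with $g_l\in S_k$ and $K(g_l,g_{l+1})=1$; its length is $|g|=n$ (with $|1_G|=0$). For $g\in G$ and $n\ge0$ the $n$-semiball at $g$ is $\bar{\Delta}^{(g)}_n=\{gh: h\in G,\ |h|\le n,\ |gh|=|g|+|h|\}$. For a finite alphabet $\mathcal{A}$, a pattern is a map $u:H\to\mathcal{A}$ with $H\subset G$ finite; $u$ is accepted by $t\in\mathcal{A}^G$ if there is $g\in G$ with $t_{gh}=u_h$ for all $h\in H$. A tree shift is a subset $X\subseteq\mathcal{A}^G$ consisting of all $t$ that accept no pattern from some fixed set $\mathcal{F}$ of patterns. $p^{(g)}_n$ denotes the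 number of patterns $u\in\mathcal{A}^{\bar{\Delta}^{(g)}_n}$ accepted by some $t\in X$. The $i$th stem entropy is $h^{(s_i)}(X)=\limsup_{n\to\infty}\log p^{(s_i)}_n/|\bar{\Delta}^{(s_i)}_n|$. A nonnegative square matrix is primitive if some power of it has all entries positive. *)

theory Defs
  imports Complex_Main "Jordan_Normal_Form.Matrix" "HOL-Library.Liminf_Limsup" "HOL-Library.Extended_Real"
    "HOL-Library.FuncSet"
begin

text \<open>Generators s_1..s_k are encoded by indices 0..k-1.  Elements of the semigroup
  G = <S_k | K> are encoded by their unique minimal representations, i.e. words
  g_1...g_n over {0..<k} with K(g_l,g_{l+1}) = 1; the empty word is 1_G.\<close>

definition Gset :: "nat \<Rightarrow> nat mat \<Rightarrow> nat list set" where
  "Gset k K = {w. set w \<subseteq> {..<k} \<and>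
      (\<forall>l. Suc l < length w \<longrightarrow> K $$ (w ! l, w ! Suc l) = 1)}"

text \<open>Product of two minimal words: concatenate and cancel s_a s_b = 1 at the junction
  whenever K(a,b) = 0.\<close>
fun gmul :: "nat mat \<Rightarrow> nat list \<Rightarrow> nat list \<Rightarrow> nat list" where
  "gmul K g [] = g"
| "gmul K g (b # h) =
     (if g \<noteq> [] \<and> K $$ (last g, b) = 0 then gmul K (butlast g) h else g @ b # h)"

definition semiball :: "nat \<Rightarrow> nat mat \<Rightarrow> nat list \<Rightarrow> nat \<Rightarrow> nat list set" where
  "semiball k K g n = {gmul K g h | h. h \<in> Gset k K \<and> length h \<le> n \<and>
      length (gmul K g h) = length g + length h}"

text \<open>Configurations t in A^G (values outside G are irrelevant and fixed to undefined).\<close>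
definition configs :: "nat \<Rightarrow> nat mat \<Rightarrow> (nat list \<Rightarrow> 'a) set" where
  "configs k K = {t. \<forall>w. w \<notin> Gset k K \<longrightarrow> t w = undefined}"

text \<open>A pattern is a pair (H,u) with H a finite subset of G and u : H -> A
  (only the values of u on H matter).  accepts k K t (H,u): t accepts the pattern.\<close>
definition accepts :: "nat \<Rightarrow> nat mat \<Rightarrow> (nat list \<Rightarrow> 'a) \<Rightarrow> nat list set \<times> (nat list \<Rightarrow> 'a) \<Rightarrow> bool" where
  "accepts k K t P = (\<exists>g \<in> Gset k K. \<forall>h \<in> fst P. t (gmul K g h) = snd P h)"

definition is_pattern :: "nat \<Rightarrow> nat mat \<Rightarrow> nat list set \<times> (nat list \<Rightarrow> 'a) \<Rightarrow> bool" where
  "is_pattern k K P = (finite (fst P) \<and> fst P \<subseteq> Gset k K)"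

definition tree_shift :: "nat \<Rightarrow> nat mat \<Rightarrow> (nat list set \<times> (nat list \<Rightarrow> 'a)) set
    \<Rightarrow> (nat list \<Rightarrow> 'a) set" where
  "tree_shift k K F = {t \<in> configs k K. \<forall>P \<in> F. \<not> accepts k K t P}"

definition is_tree_shift :: "nat \<Rightarrow> nat mat \<Rightarrow> (nat list \<Rightarrow> 'a) set \<Rightarrow> bool" where
  "is_tree_shift k K X = (\<exists>F. (\<forall>P \<in> F. is_pattern k K P) \<and> X = tree_shift k K F)"

text \<open>p^{(g)}_n: number of patterns u : semiball g n -> A accepted by some t in X
  (patterns with domain D are represented as restrict u D).\<close>
definition pcount :: "nat \<Rightarrow> nat mat \<Rightarrow> (nat list \<Rightarrow> 'a) set \<Rightarrow> nat list \<Rightarrow> nat \<Rightarrow> nat" where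
  "pcount k K X g n = card {u \<in> extensional (semiball k K g n).
      \<exists>t \<in> X. accepts k K t (semiball k K g n, u)}"

definition stem_entropy :: "nat \<Rightarrow> nat mat \<Rightarrow> (nat list \<Rightarrow> 'a) set \<Rightarrow> nat \<Rightarrow> ereal" where
  "stem_entropy k K X i = limsup (\<lambda>n. ereal (ln (real (pcount k K X [i] n))
        / real (card (semiball k K [i] n))))"

definition primitive_mat :: "nat \<Rightarrow> nat mat \<Rightarrow> bool" where
  "primitive_mat k K = (\<exists>m \<ge> 1. \<forall>i < k. \<forall>j < k. (K ^\<^sub>m m) $$ (i, j) > 0)"

end

theory Submission
  imports Defs
begin


lemma key_analysis:
  fixes r :: "nat \<Rightarrow> nat \<Rightarrow> real" and s :: "nat \<Rightarrow> nat \<Rightarrow> real" and N :: "nat set"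
    and hh :: "nat \<Rightarrow> real"
  assumes finN: "finite N" and jz: "jz \<in> N"
  and rec: "\<And>n. n \<ge> nst \<Longrightarrow> r l (Suc n) \<le> c / s l (Suc n) + (\<Sum>j\<in>N. (s j n / s l (Suc n)) * r j n)"
  and spos: "\<And>n. s l n > 0" and snn: "\<And>j n. j \<in> N \<Longrightarrow> 0 \<le> s j n"
  and ssum: "\<And>n. (\<Sum>j\<in>N. s j n) \<le> s l (Suc n)"
  and dpos: "\<delta> > 0" and comp: "\<And>n. n \<ge> nst \<Longrightarrow> \<delta> * s l (Suc n) \<le> s jz n"
  and small: "\<And>\<epsilon>. \<epsilon> > 0 \<Longrightarrow> \<exists>M. \<forall>n\<ge>M. c / s l (Suc n) < \<epsilon>"
  and lim: "\<And>j. j \<in> insert l N \<Longrightarrow> limsup (\<lambda>n. ereal (r j n)) = ereal (hh j)"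
  and mx: "\<And>j. j \<in> N \<Longrightarrow> hh j \<le> hh l" and H0: "0 \<le> hh l"
  shows "hh jz = hh l"
proof (rule ccontr)
  assume ne: "hh jz \<noteq> hh l"
  define H where "H = hh l"
  have lt: "hh jz < H" using ne mx[OF jz] H_def by simp
  define \<eta> where "\<eta> = \<delta> * (H - hh jz) / 4"
  have eta: "\<eta> > 0" using dpos lt by (simp add: \<eta>_def)
  have ev1: "eventually (\<lambda>n. \<forall>j\<in>N. r j n < H + \<eta>) sequentially"
  proof (rule eventually_ball_finite[OF finN], rule ballI)
    fix j assume j: "j \<in> N"
    have "limsup (\<lambda>n. ereal (r j n)) < ereal (H + \<eta>)" using lim[of j] j mx[OF j] eta H_def by simp
    from Limsup_lessD[OF this] show "eventually (\<lambda>n. r j n < H + \<eta>) sequentially" by simp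
  qed
  have ev2: "eventually (\<lambda>n. r jz n < hh jz + \<eta>) sequentially"
  proof -
    have "limsup (\<lambda>n. ereal (r jz n)) < ereal (hh jz + \<eta>)" using lim[of jz] jz eta by simp
    from Limsup_lessD[OF this] show ?thesis by simp
  qed
  obtain M where M: "\<forall>n\<ge>M. c / s l (Suc n) < \<eta>" using small[OF eta] by blast
  have ev3: "eventually (\<lambda>n. n \<ge> nst \<and> c / s l (Suc n) < \<eta>) sequentially"
    unfolding eventually_sequentially using M by (intro exI[of _ "max nst M"]) auto
  have "eventually (\<lambda>n. r l (Suc n) \<le> H - 2 * \<eta>) sequentially"
    using ev1 ev2 ev3
  proof eventually_elim
    case (elim n)
    define a where "a j = s j n / s l (Suc n)" for j
    have a0: "\<And>j. j \<in> N \<Longrightarrow> 0 \<le> a j" unfolding a_def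
      using snn spos[of "Suc n"] by (intro divide_nonneg_pos) auto
    have "(\<Sum>j\<in>N. a j) = (\<Sum>j\<in>N. s j n) / s l (Suc n)" by (simp add: a_def sum_divide_distrib)
    also have "\<dots> \<le> 1" using ssum[of n] spos[of "Suc n"] by simp
    finally have asum: "(\<Sum>j\<in>N. a j) \<le> 1" .
    have aj0: "\<delta> \<le> a jz" using comp[of n] elim spos[of "Suc n"] by (simp add: a_def field_simps)
    have split: "(\<Sum>j\<in>N. a j * r j n) = (\<Sum>j\<in>N. a j * (r j n - (H + \<eta>))) + (H + \<eta>) * (\<Sum>j\<in>N. a j)"
      by (simp add: algebra_simps sum.distrib sum_distrib_left sum_subtractf)
    have rm: "(\<Sum>j\<in>N. a j * (r j n - (H + \<eta>))) = a jz * (r jz n - (H + \<eta>)) + (\<Sum>j\<in>N-{jz}. a j * (r j n - (H + \<eta>)))"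
      using sum.remove[OF finN jz] .
    have t1: "(\<Sum>j\<in>N-{jz}. a j * (r j n - (H + \<eta>))) \<le> 0"
      by (rule sum_nonpos) (use elim a0 in \<open>auto intro!: mult_nonneg_nonpos\<close>)
    have t2: "a jz * (r jz n - (H + \<eta>)) \<le> a jz * (hh jz - H)"
      using elim a0[OF jz] by (intro mult_left_mono) auto
    have t3: "a jz * (hh jz - H) \<le> \<delta> * (hh jz - H)" using aj0 lt by (intro mult_right_mono_neg) auto
    have t4: "(H + \<eta>) * (\<Sum>j\<in>N. a j) \<le> H + \<eta>" using asum H0 eta H_def by (simp add: mult_left_le)
    have t5: "\<delta> * (hh jz - H) = - 4 * \<eta>" by (simp add: \<eta>_def algebra_simps)
    have "r l (Suc n) \<le> c / s l (Suc n) + (\<Sum>j\<in>N. a j * r j n)" using rec[of n] elim by (simp add: a_def)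
    then show ?case using split rm t1 t2 t3 t4 t5 elim by linarith
  qed
  then have "eventually (\<lambda>n. ereal (r l n) \<le> ereal (H - 2 * \<eta>)) sequentially"
    by (subst eventually_sequentially_Suc[symmetric]) simp
  then have "limsup (\<lambda>n. ereal (r l n)) \<le> ereal (H - 2 * \<eta>)" by (rule Limsup_bounded)
  then show False using lim[of l] eta H_def by simp
qed

locale tsetup =
  fixes k :: nat and K :: "nat mat" and X :: "(nat list \<Rightarrow> 'a::finite) set"
  assumes Kc: "K \<in> carrier_mat k k"
    and K01: "\<forall>i < k. \<forall>j < k. K $$ (i, j) \<in> {0, 1}"
begin

lemma Gset_Nil[simp]: "[] \<in> Gset k K" by (simp add: Gset_def)

lemma Gset_Cons: "x # w \<in> Gset k K \<longleftrightarrow> x < k \<and> w \<in> Gset k K \<and> (w \<noteq> [] \<longrightarrow> K $$ (x, hd w) = 1)"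
proof
  assume a: "x # w \<in> Gset k K"
  have "\<forall>l. Suc l < length w \<longrightarrow> K $$ (w ! l, w ! Suc l) = 1"
  proof (intro allI impI)
    fix l assume "Suc l < length w"
    with a have "K $$ ((x#w) ! Suc l, (x#w) ! Suc (Suc l)) = 1" unfolding Gset_def by auto
    then show "K $$ (w ! l, w ! Suc l) = 1" by simp
  qed
  moreover have "w \<noteq> [] \<longrightarrow> K $$ (x, hd w) = 1"
  proof
    assume "w \<noteq> []"
    with a have "K $$ ((x#w) ! 0, (x#w) ! Suc 0) = 1" unfolding Gset_def by auto
    then show "K $$ (x, hd w) = 1" using \<open>w \<noteq> []\<close> by (simp add: hd_conv_nth)
  qed
  ultimately show "x < k \<and> w \<in> Gset k K \<and> (w \<noteq> [] \<longrightarrow> K $$ (x, hd w) = 1)"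
    using a unfolding Gset_def by auto
next
  assume a: "x < k \<and> w \<in> Gset k K \<and> (w \<noteq> [] \<longrightarrow> K $$ (x, hd w) = 1)"
  show "x # w \<in> Gset k K" unfolding Gset_def
  proof (intro CollectI conjI allI impI)
    show "set (x # w) \<subseteq> {..<k}" using a by (auto simp: Gset_def)
    fix l assume l: "Suc l < length (x # w)"
    show "K $$ ((x # w) ! l, (x # w) ! Suc l) = 1"
    proof (cases l)
      case 0 then show ?thesis using a l by (auto simp: hd_conv_nth)
    next
      case (Suc l') then show ?thesis using a l by (auto simp: Gset_def)
    qed
  qed
qed

lemma Gset_append: "a \<noteq> [] \<Longrightarrow> b \<noteq> [] \<Longrightarrow>
   a @ b \<in> Gset k K \<longleftrightarrow> a \<in> Gset k K \<and> b \<in> Gset k K \<and> K $$ (last a, hd b) = 1"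
proof (induction a)
  case Nil then show ?case by simp
next
  case (Cons x a)
  show ?case
  proof (cases "a = []")
    case True then show ?thesis using Cons.prems by (simp add: Gset_Cons)
  next
    case False
    then show ?thesis using Cons by (auto simp: Gset_Cons)
  qed
qed

lemma Gset_butlast: "g \<in> Gset k K \<Longrightarrow> butlast g \<in> Gset k K"
proof (cases "butlast g = []")
  case False
  assume g: "g \<in> Gset k K"
  then have "g \<noteq> []" using False by auto
  then have e: "g = butlast g @ [last g]" by simp
  have "butlast g @ [last g] \<in> Gset k K" using g e by simp
  then show ?thesis using Gset_append[of "butlast g" "[last g]"] False by blast
qed simp

lemma gmul_Nil_left[simp]: "gmul K [] h = h" by (cases h) auto

lemma Kone: "a < k \<Longrightarrow> b < k \<Longrightarrow> K $$ (a, b) \<noteq> 0 \<Longrightarrow> K $$ (a, b) = 1"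
proof -
  assume "a < k" "b < k" "K $$ (a, b) \<noteq> 0"
  then have "K $$ (a, b) \<in> {0, 1}" using K01[rule_format, OF \<open>a < k\<close> \<open>b < k\<close>] by simp
  then show ?thesis using \<open>K $$ (a, b) \<noteq> 0\<close> by simp
qed

lemma gmul_Gset: "g \<in> Gset k K \<Longrightarrow> h \<in> Gset k K \<Longrightarrow> gmul K g h \<in> Gset k K"
proof (induction h arbitrary: g)
  case Nil then show ?case by simp
next
  case (Cons b h)
  have hG: "h \<in> Gset k K" and bk: "b < k" using Cons.prems by (auto simp: Gset_Cons)
  show ?case
  proof (cases "g \<noteq> [] \<and> K $$ (last g, b) = 0")
    case True
    then show ?thesis using Cons hG Gset_butlast by simp
  next
    case False
    show ?thesis
    proof (cases "g = []")
      case True then show ?thesis using Cons.prems False by simp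
    next
      case gn: False
      have "last g < k" using Cons.prems(1) last_in_set[OF gn] unfolding Gset_def by blast
      then have "K $$ (last g, b) = 1" using False gn Kone bk by blast
      then show ?thesis using Gset_append[of g "b#h"] gn Cons.prems False by simp
    qed
  qed
qed


definition SB :: "nat \<Rightarrow> nat \<Rightarrow> nat list set" where
  "SB i n = semiball k K [i] n"

definition Nb :: "nat \<Rightarrow> nat set" where
  "Nb i = {j. j < k \<and> K $$ (i, j) = 1}"

lemma Nb_finite: "finite (Nb i)" unfolding Nb_def by simp

lemma SB_char: assumes ik: "i < k"
  shows "SB i n = {w \<in> Gset k K. w \<noteq> [] \<and> hd w = i \<and> length w \<le> Suc n}"
proof (intro equalityI subsetI)
  fix w assume "w \<in> SB i n"
  then obtain h where w: "w = gmul K [i] h" and hG: "h \<in> Gset k K" and hl: "length h \<le> n"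
    and len: "length (gmul K [i] h) = length [i] + length h"
    unfolding SB_def semiball_def by blast
  show "w \<in> {w \<in> Gset k K. w \<noteq> [] \<and> hd w = i \<and> length w \<le> Suc n}"
  proof (cases h)
    case Nil then show ?thesis using w ik by (simp add: Gset_Cons)
  next
    case (Cons b h')
    have bk: "b < k" and h'G: "h' \<in> Gset k K" using hG Cons by (auto simp: Gset_Cons)
    show ?thesis
    proof (cases "K $$ (i, b) = 0")
      case True then show ?thesis using len Cons by simp
    next
      case False
      then have "K $$ (i, b) = 1" using Kone ik bk by blast
      then show ?thesis using w Cons False hG hl ik by (simp add: Gset_Cons)
    qed
  qed
next
  fix w assume "w \<in> {w \<in> Gset k K. w \<noteq> [] \<and> hd w = i \<and> length w \<le> Suc n}"
  then obtain h where w: "w = i # h" and G: "i # h \<in> Gset k K" and hl: "length h \<le> n"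
    by (cases w) auto
  have hG: "h \<in> Gset k K" using G by (simp add: Gset_Cons)
  have e: "gmul K [i] h = i # h"
  proof (cases h)
    case (Cons b h')
    then have "K $$ (i, b) = 1" using G by (simp add: Gset_Cons)
    then show ?thesis using Cons by simp
  qed simp
  show "w \<in> SB i n" unfolding SB_def semiball_def using e w hG hl by force
qed

lemma SB_finite: assumes "i < k" shows "finite (SB i n)"
proof -
  have "SB i n \<subseteq> {w. set w \<subseteq> {..<k} \<and> length w \<le> Suc n}"
    using SB_char[OF assms] by (auto simp: Gset_def)
  then show ?thesis using finite_lists_length_le[of "{..<k}" "Suc n"] finite_subset by blast
qed

lemma SB_single: "i < k \<Longrightarrow> [i] \<in> SB i n"
  by (simp add: SB_char Gset_Cons)

lemma SB_mono: "i < k \<Longrightarrow> SB i n \<subseteq> SB i (Suc n)"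
  by (auto simp: SB_char)

lemma SB_Suc: assumes ik: "i < k"
  shows "SB i (Suc n) = insert [i] (\<Union>j\<in>Nb i. Cons i ` SB j n)"
proof (intro equalityI subsetI)
  fix w assume "w \<in> SB i (Suc n)"
  then have w: "w \<in> Gset k K" "w \<noteq> []" "hd w = i" "length w \<le> Suc (Suc n)"
    using SB_char[OF ik] by auto
  then obtain h where wh: "w = i # h" by (cases w) auto
  show "w \<in> insert [i] (\<Union>j\<in>Nb i. Cons i ` SB j n)"
  proof (cases h)
    case Nil then show ?thesis using wh by simp
  next
    case (Cons j h')
    have "j < k" "K $$ (i, j) = 1" "h \<in> Gset k K" using w(1) wh Cons by (auto simp: Gset_Cons)
    then have "j \<in> Nb i" "h \<in> SB j n" using SB_char[of j n] w(4) wh Cons by (auto simp: Nb_def)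
    then show ?thesis using wh by blast
  qed
next
  fix w assume "w \<in> insert [i] (\<Union>j\<in>Nb i. Cons i ` SB j n)"
  then show "w \<in> SB i (Suc n)"
  proof
    assume "w = [i]" then show ?thesis using SB_single ik by simp
  next
    assume "w \<in> (\<Union>j\<in>Nb i. Cons i ` SB j n)"
    then obtain j h where j: "j \<in> Nb i" and h: "h \<in> SB j n" and wh: "w = i # h" by blast
    have jk: "j < k" "K $$ (i, j) = 1" using j by (auto simp: Nb_def)
    have "h \<in> Gset k K" "h \<noteq> []" "hd h = j" "length h \<le> Suc n" using h SB_char[OF jk(1)] by auto
    then show ?thesis using wh jk ik SB_char[OF ik] by (simp add: Gset_Cons)
  qed
qed

definition S :: "nat \<Rightarrow> nat \<Rightarrow> nat" where
  "S i n = card (SB i n)"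

lemma Nb_k: "j \<in> Nb i \<Longrightarrow> j < k" by (simp add: Nb_def)

lemma SB_ne: "j < k \<Longrightarrow> h \<in> SB j n \<Longrightarrow> h \<noteq> [] \<and> hd h = j"
  using SB_char by blast

lemma S_Suc: assumes ik: "i < k"
  shows "S i (Suc n) = 1 + (\<Sum>j\<in>Nb i. S j n)"
proof -
  have fin: "finite (\<Union>j\<in>Nb i. Cons i ` SB j n)"
    by (rule finite_UN_I[OF Nb_finite]) (simp add: SB_finite Nb_k)
  have nin: "[i] \<notin> (\<Union>j\<in>Nb i. Cons i ` SB j n)"
  proof
    assume "[i] \<in> (\<Union>j\<in>Nb i. Cons i ` SB j n)"
    then obtain j h where jh: "j \<in> Nb i" "h \<in> SB j n" "[i] = i # h" by blast
    have "h \<noteq> []" using SB_ne[OF Nb_k[OF jh(1)] jh(2)] by simp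
    then show False using jh(3) by simp
  qed
  have "card (\<Union>j\<in>Nb i. Cons i ` SB j n) = (\<Sum>j\<in>Nb i. card (Cons i ` SB j n))"
  proof (rule card_UN_disjoint)
    show "finite (Nb i)" by (rule Nb_finite)
    show "\<forall>j\<in>Nb i. finite (Cons i ` SB j n)" by (simp add: SB_finite Nb_k)
    show "\<forall>j\<in>Nb i. \<forall>j'\<in>Nb i. j \<noteq> j' \<longrightarrow> Cons i ` SB j n \<inter> Cons i ` SB j' n = {}"
    proof (intro ballI impI)
      fix j j' assume jj: "j \<in> Nb i" "j' \<in> Nb i" "j \<noteq> j'"
      show "Cons i ` SB j n \<inter> Cons i ` SB j' n = {}"
      proof (rule ccontr)
        assume "Cons i ` SB j n \<inter> Cons i ` SB j' n \<noteq> {}"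
        then obtain h h' where "h \<in> SB j n" "h' \<in> SB j' n" "i # h = i # h'" by blast
        then show False using SB_ne[of j h n] SB_ne[of j' h' n] Nb_k jj by auto
      qed
    qed
  qed
  also have "\<dots> = (\<Sum>j\<in>Nb i. S j n)" by (simp add: card_image S_def)
  finally show ?thesis unfolding S_def using SB_Suc[OF ik] fin nin by simp
qed

lemma S_pos: assumes "i < k" shows "S i n \<ge> 1"
proof -
  have "finite (SB i n)" "[i] \<in> SB i n" using assms by (simp_all add: SB_finite SB_single)
  then show ?thesis unfolding S_def by (metis One_nat_def Suc_leI card_gt_0_iff empty_iff)
qed

lemma S_mono: "i < k \<Longrightarrow> S i n \<le> S i (Suc n)"
  unfolding S_def by (rule card_mono[OF SB_finite SB_mono])

lemma S_nb: "i < k \<Longrightarrow> j \<in> Nb i \<Longrightarrow> 1 + S j n \<le> S i (Suc n)"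
  using S_Suc[of i n] member_le_sum[of j "Nb i" "\<lambda>j. S j n"] Nb_finite by simp


lemma mult_entry: assumes "A \<in> carrier_mat k k" "B \<in> carrier_mat k k" "j < k" "l < k"
  shows "(A * B) $$ (j, l) = (\<Sum>q<k. A $$ (j, q) * B $$ (q, l))"
  using assms by (simp add: scalar_prod_def lessThan_atLeast0)

lemma mult_entry_pos: assumes "A \<in> carrier_mat k k" "B \<in> carrier_mat k k" "j < k" "l < k"
  and "(A * B) $$ (j, l) > (0::nat)"
  shows "\<exists>q<k. A $$ (j, q) > 0 \<and> B $$ (q, l) > 0"
proof (rule ccontr)
  assume "\<not> ?thesis"
  then have "\<forall>q\<in>{..<k}. A $$ (j, q) * B $$ (q, l) = 0" by auto
  then have s0: "(\<Sum>q<k. A $$ (j, q) * B $$ (q, l)) = 0" by simp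
  have "(A * B) $$ (j, l) = 0" using mult_entry[OF assms(1-4)] s0 by simp
  then show False using assms(5) by simp
qed

lemma pow_commute: "K ^\<^sub>m m * K = K * K ^\<^sub>m m"
proof (induction m)
  case 0 then show ?case using Kc by simp
next
  case (Suc m)
  have "K ^\<^sub>m Suc m * K = (K ^\<^sub>m m * K) * K" by simp
  also have "\<dots> = (K * K ^\<^sub>m m) * K" using Suc by simp
  also have "\<dots> = K * (K ^\<^sub>m m * K)" using Kc by (simp add: assoc_mult_mat[of _ k k _ k _ k])
  finally show ?case by simp
qed

lemma pos_Nb: "q < k \<Longrightarrow> l < k \<Longrightarrow> K $$ (q, l) > 0 \<Longrightarrow> l \<in> Nb q"
  using Kone by (simp add: Nb_def)

lemma path_S: "(K ^\<^sub>m m) $$ (j, l) > 0 \<Longrightarrow> j < k \<Longrightarrow> l < k \<Longrightarrow> S l n \<le> S j (n + m)"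
proof (induction m arbitrary: l n)
  case 0 then show ?case using Kc by (simp split: if_splits)
next
  case (Suc m)
  have "(K ^\<^sub>m m * K) $$ (j, l) > 0" using Suc.prems by simp
  then obtain q where q: "q < k" "(K ^\<^sub>m m) $$ (j, q) > 0" "K $$ (q, l) > 0"
    using mult_entry_pos[of "K ^\<^sub>m m" K j l] Kc Suc.prems by auto
  have "S l n \<le> S q (Suc n)" using S_nb[OF q(1) pos_Nb[OF q(1) Suc.prems(3) q(3)], of n] by simp
  also have "\<dots> \<le> S j (Suc n + m)" using Suc.IH[OF q(2) Suc.prems(2) q(1), of "Suc n"] by simp
  finally show ?case by simp
qed

definition B :: "nat \<Rightarrow> nat" where "B n = (\<Sum>l<k. S l n)"

lemma S_le_B: "l < k \<Longrightarrow> S l n \<le> B n"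
  unfolding B_def by (rule member_le_sum) auto

lemma B_pos: "0 < k \<Longrightarrow> 1 \<le> B n"
  using S_le_B[of 0 n] S_pos[of 0 n] by simp

lemma B_Suc: assumes "0 < k" shows "B (Suc n) \<le> 2 * k * B n"
proof -
  have "S i (Suc n) \<le> 2 * B n" if "i < k" for i
  proof -
    have "(\<Sum>j\<in>Nb i. S j n) \<le> (\<Sum>j<k. S j n)"
      by (rule sum_mono2) (auto simp: Nb_def)
    then show ?thesis using S_Suc[OF that, of n] B_pos[OF assms, of n] unfolding B_def by simp
  qed
  then have "B (Suc n) \<le> (\<Sum>i<k. 2 * B n)" unfolding B_def[of "Suc n"] by (intro sum_mono) auto
  then show ?thesis by simp
qed

lemma B_add: assumes "0 < k" shows "B (n + t) \<le> (2 * k) ^ t * B n"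
proof (induction t)
  case 0 then show ?case by simp
next
  case (Suc t)
  have "B (n + Suc t) \<le> 2 * k * B (n + t)" using B_Suc[OF assms] by simp
  also have "\<dots> \<le> 2 * k * ((2 * k) ^ t * B n)" using Suc by simp
  finally show ?case by simp
qed

lemma comparable:
  assumes m: "\<forall>j<k. \<forall>l<k. (K ^\<^sub>m m) $$ (j, l) > 0" and q: "q < k" and jz: "jz < k"
  shows "S q (Suc (n + m)) \<le> (2 * k) ^ Suc m * k * S jz (n + m)"
proof -
  have k0: "0 < k" using q by simp
  have "B n \<le> (\<Sum>l<k. S jz (n + m))" unfolding B_def
    by (rule sum_mono) (use path_S m jz in auto)
  then have Bn: "B n \<le> k * S jz (n + m)" by simp
  have "S q (Suc (n + m)) \<le> B (n + Suc m)" using S_le_B[OF q] by simp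
  also have "\<dots> \<le> (2 * k) ^ Suc m * B n" by (rule B_add[OF k0])
  also have "\<dots> \<le> (2 * k) ^ Suc m * (k * S jz (n + m))" using Bn by simp
  finally show ?thesis by (simp add: mult.assoc)
qed

lemma row_nb: assumes m: "m \<ge> 1" "\<forall>j<k. \<forall>l<k. (K ^\<^sub>m m) $$ (j, l) > 0" and i: "i < k"
  shows "\<exists>l. l \<in> Nb i"
proof -
  obtain m' where m': "m = Suc m'" using m(1) by (cases m) auto
  have "(K * K ^\<^sub>m m') $$ (i, i) > 0" using m(2) i m' pow_commute[of m'] by simp
  then obtain q where "q < k" "K $$ (i, q) > 0"
    using mult_entry_pos[of K "K ^\<^sub>m m'" i i] Kc i by auto
  then show ?thesis using pos_Nb i by blast
qed

lemma S_grow: assumes "\<forall>i<k. \<exists>l. l \<in> Nb i"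
  shows "i < k \<Longrightarrow> Suc n \<le> S i n"
proof (induction n arbitrary: i)
  case 0 then show ?case using S_pos by simp
next
  case (Suc n)
  obtain l where l: "l \<in> Nb i" using assms Suc.prems by blast
  show ?case using S_nb[OF Suc.prems l, of n] Suc.IH[OF Nb_k[OF l]] by simp
qed


definition PS :: "nat \<Rightarrow> nat \<Rightarrow> (nat list \<Rightarrow> 'a) set" where
  "PS i n = {u \<in> extensional (SB i n). \<exists>t\<in>X. accepts k K t (SB i n, u)}"

definition P :: "nat \<Rightarrow> nat \<Rightarrow> nat" where
  "P i n = card (PS i n)"

lemma P_pcount: "P i n = pcount k K X [i] n"
  unfolding P_def PS_def pcount_def SB_def by simp

lemma PS_sub: "PS i n \<subseteq> PiE (SB i n) (\<lambda>_. UNIV)"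
  unfolding PS_def PiE_def by auto

lemma PS_finite: "i < k \<Longrightarrow> finite (PS i n)"
  using PS_sub finite_PiE[OF SB_finite] finite_subset by (metis finite_UNIV)

lemma P_le: assumes "i < k" shows "P i n \<le> card (UNIV :: 'a set) ^ S i n"
proof -
  have "P i n \<le> card (PiE (SB i n) (\<lambda>_. UNIV :: 'a set))"
    unfolding P_def by (rule card_mono[OF finite_PiE[OF SB_finite[OF assms]] PS_sub]) simp
  also have "\<dots> = card (UNIV :: 'a set) ^ S i n" using SB_finite[OF assms] by (simp add: card_PiE S_def)
  finally show ?thesis .
qed

lemma gmul_step: "K $$ (i, j) = 1 \<Longrightarrow> gmul K (gmul K g [i]) (j # v) = gmul K g (i # j # v)"
  by (cases "g \<noteq> [] \<and> K $$ (last g, i) = 0") auto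

lemma P_Suc: assumes ik: "i < k"
  shows "P i (Suc n) \<le> card (UNIV :: 'a set) * (\<Prod>j\<in>Nb i. P j n)"
proof -
  define \<Phi> where "\<Phi> = (\<lambda>u::nat list \<Rightarrow> 'a. (u [i], (\<lambda>j\<in>Nb i. \<lambda>v\<in>SB j n. u (i # v))))"
  define T where "T = (UNIV :: 'a set) \<times> PiE (Nb i) (\<lambda>j. PS j n)"
  have inj: "inj_on \<Phi> (PS i (Suc n))"
  proof (rule inj_onI)
    fix u u' assume u: "u \<in> PS i (Suc n)" and u': "u' \<in> PS i (Suc n)" and e: "\<Phi> u = \<Phi> u'"
    show "u = u'"
    proof (rule extensionalityI[of u "SB i (Suc n)"])
      show "u \<in> extensional (SB i (Suc n))" "u' \<in> extensional (SB i (Suc n))"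
        using u u' unfolding PS_def by auto
      fix w assume "w \<in> SB i (Suc n)"
      then have "w = [i] \<or> (\<exists>j\<in>Nb i. \<exists>v\<in>SB j n. w = i # v)" using SB_Suc[OF ik] by auto
      then show "u w = u' w"
      proof
        assume "w = [i]" then show ?thesis using e unfolding \<Phi>_def by simp
      next
        assume "\<exists>j\<in>Nb i. \<exists>v\<in>SB j n. w = i # v"
        then obtain j v where jv: "j \<in> Nb i" "v \<in> SB j n" "w = i # v" by blast
        have "(\<lambda>j\<in>Nb i. \<lambda>v\<in>SB j n. u (i # v)) j v = (\<lambda>j\<in>Nb i. \<lambda>v\<in>SB j n. u' (i # v)) j v"
          using e unfolding \<Phi>_def by simp
        then show ?thesis using jv by simp
      qed
    qed
  qed
  have img: "\<Phi> ` PS i (Suc n) \<subseteq> T"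
  proof
    fix x assume "x \<in> \<Phi> ` PS i (Suc n)"
    then obtain u where u: "u \<in> PS i (Suc n)" and x: "x = \<Phi> u" by blast
    from u obtain t g where t: "t \<in> X" and g: "g \<in> Gset k K"
      and tg: "\<forall>w\<in>SB i (Suc n). t (gmul K g w) = u w"
      unfolding PS_def accepts_def by auto
    have "(\<lambda>v\<in>SB j n. u (i # v)) \<in> PS j n" if j: "j \<in> Nb i" for j
    proof -
      have jk: "j < k" "K $$ (i, j) = 1" using j by (auto simp: Nb_def)
      have "[i] \<in> Gset k K" using ik by (simp add: Gset_Cons)
      then have g': "gmul K g [i] \<in> Gset k K" using gmul_Gset[OF g] by blast
      have "\<forall>v\<in>SB j n. t (gmul K (gmul K g [i]) v) = (\<lambda>v\<in>SB j n. u (i # v)) v"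
      proof
        fix v assume v: "v \<in> SB j n"
        have "v \<noteq> [] \<and> hd v = j" using SB_ne[OF jk(1) v] .
        then obtain v' where v': "v = j # v'" by (cases v) auto
        have "i # v \<in> SB i (Suc n)" using SB_Suc[OF ik] j v by blast
        then have "t (gmul K g (i # v)) = u (i # v)" using tg by blast
        moreover have "gmul K (gmul K g [i]) v = gmul K g (i # v)"
          unfolding v' by (rule gmul_step[OF jk(2)])
        ultimately show "t (gmul K (gmul K g [i]) v) = (\<lambda>v\<in>SB j n. u (i # v)) v"
          using v by (simp del: gmul.simps)
      qed
      then show ?thesis unfolding PS_def accepts_def using t g' by auto
    qed
    then show "x \<in> T" unfolding x \<Phi>_def T_def by auto
  qed
  have "P i (Suc n) = card (\<Phi> ` PS i (Suc n))" unfolding P_def using card_image[OF inj] by simp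
  also have "\<dots> \<le> card T"
    by (rule card_mono[OF _ img]) (simp add: T_def Nb_finite PS_finite Nb_k finite_PiE)
  also have "card T = card (UNIV :: 'a set) * (\<Prod>j\<in>Nb i. P j n)"
    unfolding T_def by (simp add: card_cartesian_product card_PiE Nb_finite P_def)
  finally show ?thesis .
qed


lemma S_rpos: assumes "i < k" shows "0 < real (S i n)"
proof -
  have "1 \<le> S i n" by (rule S_pos[OF assms])
  then show ?thesis by simp
qed

lemma lnnat: "0 \<le> ln (real (m::nat))"
  by (cases "m = 0") auto

lemma cardA: "1 \<le> card (UNIV :: 'a set)"
  using card_gt_0_iff[of "UNIV :: 'a set"] by simp

lemma ln_P_Suc: assumes ik: "i < k"
  shows "ln (real (P i (Suc n))) \<le> ln (real (card (UNIV :: 'a set))) + (\<Sum>j\<in>Nb i. ln (real (P j n)))"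
proof (cases "P i (Suc n) = 0")
  case True
  have "0 \<le> ln (real (card (UNIV :: 'a set))) + (\<Sum>j\<in>Nb i. ln (real (P j n)))"
    using lnnat by (intro add_nonneg_nonneg sum_nonneg) auto
  then show ?thesis using True by simp
next
  case False
  have le: "P i (Suc n) \<le> card (UNIV :: 'a set) * (\<Prod>j\<in>Nb i. P j n)" by (rule P_Suc[OF ik])
  have pnz: "(\<Prod>j\<in>Nb i. P j n) \<noteq> 0"
  proof
    assume "(\<Prod>j\<in>Nb i. P j n) = 0"
    then have "P i (Suc n) \<le> 0" using le by simp
    then show False using False by simp
  qed
  then have "(\<Prod>j\<in>Nb i. P j n) \<noteq> 0" .
  then have nz: "\<And>j. j \<in> Nb i \<Longrightarrow> P j n \<noteq> 0" using Nb_finite by auto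
  have "ln (real (P i (Suc n))) \<le> ln (real (card (UNIV :: 'a set) * (\<Prod>j\<in>Nb i. P j n)))"
  proof (rule ln_mono)
    show "real (P i (Suc n)) \<le> real (card (UNIV :: 'a set) * (\<Prod>j\<in>Nb i. P j n))"
      using le by (simp only: of_nat_le_iff)
    show "0 < real (P i (Suc n))" using False by simp
  qed
  also have "\<dots> = ln (real (card (UNIV :: 'a set)) * (\<Prod>j\<in>Nb i. real (P j n)))"
    by simp
  also have "\<dots> = ln (real (card (UNIV :: 'a set))) + ln (\<Prod>j\<in>Nb i. real (P j n))"
    using cardA nz Nb_finite by (subst ln_mult) auto
  also have "ln (\<Prod>j\<in>Nb i. real (P j n)) = (\<Sum>j\<in>Nb i. ln (real (P j n)))"
    using nz Nb_finite by (subst ln_prod) auto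
  finally show ?thesis .
qed

definition r :: "nat \<Rightarrow> nat \<Rightarrow> real" where
  "r i n = ln (real (P i n)) / real (S i n)"

lemma r_rec: assumes ik: "i < k"
  shows "r i (Suc n) \<le> ln (real (card (UNIV :: 'a set))) / real (S i (Suc n))
     + (\<Sum>j\<in>Nb i. (real (S j n) / real (S i (Suc n))) * r j n)"
proof -
  have sp: "0 < real (S i (Suc n))" by (rule S_rpos[OF ik])
  have "(\<Sum>j\<in>Nb i. (real (S j n) / real (S i (Suc n))) * r j n)
      = (\<Sum>j\<in>Nb i. ln (real (P j n)) / real (S i (Suc n)))"
  proof (rule sum.cong[OF refl])
    fix j assume "j \<in> Nb i"
    then have "0 < real (S j n)" using S_rpos Nb_k by blast
    then show "(real (S j n) / real (S i (Suc n))) * r j n = ln (real (P j n)) / real (S i (Suc n))"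
      unfolding r_def by (simp add: field_simps)
  qed
  also have "\<dots> = (\<Sum>j\<in>Nb i. ln (real (P j n))) / real (S i (Suc n))"
    by (simp add: sum_divide_distrib)
  finally have e: "(\<Sum>j\<in>Nb i. (real (S j n) / real (S i (Suc n))) * r j n)
      = (\<Sum>j\<in>Nb i. ln (real (P j n))) / real (S i (Suc n))" .
  have "r i (Suc n) \<le> (ln (real (card (UNIV :: 'a set))) + (\<Sum>j\<in>Nb i. ln (real (P j n)))) / real (S i (Suc n))"
    unfolding r_def using ln_P_Suc[OF ik, of n] sp by (intro divide_right_mono) auto
  then show ?thesis using e by (simp add: add_divide_distrib)
qed

lemma r_nonneg: "0 \<le> r i n"
  unfolding r_def using lnnat by simp

lemma r_le: assumes ik: "i < k" shows "r i n \<le> ln (real (card (UNIV :: 'a set)))"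
proof -
  have sp: "0 < real (S i n)" by (rule S_rpos[OF ik])
  have "ln (real (P i n)) \<le> real (S i n) * ln (real (card (UNIV :: 'a set)))"
  proof (cases "P i n = 0")
    case True then show ?thesis using cardA by simp
  next
    case False
    have "real (P i n) \<le> real (card (UNIV :: 'a set)) ^ S i n"
    proof -
      have "real (P i n) \<le> real (card (UNIV :: 'a set) ^ S i n)"
        using P_le[OF ik, of n] by (simp only: of_nat_le_iff)
      then show ?thesis by simp
    qed
    then have "ln (real (P i n)) \<le> ln (real (card (UNIV :: 'a set)) ^ S i n)"
      using False by (intro ln_mono) auto
    then show ?thesis by (simp add: ln_realpow)
  qed
  then show ?thesis unfolding r_def using sp by (simp add: divide_le_eq mult.commute)
qed

lemma stem_eq: "stem_entropy k K X i = limsup (\<lambda>n. ereal (r i n))"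
  unfolding stem_entropy_def r_def P_pcount S_def SB_def ..

lemma nb_max:
  assumes m1: "m \<ge> 1" and prim: "\<forall>j<k. \<forall>l<k. (K ^\<^sub>m m) $$ (j, l) > 0"
  and q: "q < k" and jz: "jz \<in> Nb q"
  and hh: "\<And>j. j < k \<Longrightarrow> limsup (\<lambda>n. ereal (r j n)) = ereal (hh j)"
  and mx: "\<And>j. j < k \<Longrightarrow> hh j \<le> hh q" and H0: "0 \<le> hh q"
  shows "hh jz = hh q"
proof (rule key_analysis[where r = r and s = "\<lambda>j n. real (S j n)" and N = "Nb q" and l = q
      and c = "ln (real (card (UNIV :: 'a set)))" and nst = m and \<delta> = "1 / (real ((2 * k) ^ Suc m * k))"])
  show "finite (Nb q)" by (rule Nb_finite)
  show "jz \<in> Nb q" by (rule jz)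
  show "r q (Suc n) \<le> ln (real (card (UNIV :: 'a set))) / real (S q (Suc n))
     + (\<Sum>j\<in>Nb q. (real (S j n) / real (S q (Suc n))) * r j n)" for n
    by (rule r_rec[OF q])
  show "0 < real (S q n)" for n by (rule S_rpos[OF q])
  show "0 \<le> real (S j n)" for j n by simp
  show "(\<Sum>j\<in>Nb q. real (S j n)) \<le> real (S q (Suc n))" for n
    using S_Suc[OF q, of n] by (simp flip: of_nat_sum)
  have k0: "0 < k" using q by simp
  show "0 < 1 / real ((2 * k) ^ Suc m * k)" using k0 by simp
  show "1 / real ((2 * k) ^ Suc m * k) * real (S q (Suc n)) \<le> real (S jz n)" if "m \<le> n" for n
  proof -
    define n' where "n' = n - m"
    have n': "n = n' + m" using that unfolding n'_def by simp
    have "S q (Suc n) \<le> (2 * k) ^ Suc m * k * S jz n"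
      using comparable[OF prim q Nb_k[OF jz], of n'] n' by simp
    then have "real (S q (Suc n)) \<le> real ((2 * k) ^ Suc m * k) * real (S jz n)"
      proof -
      have "real (S q (Suc n)) \<le> real ((2 * k) ^ Suc m * k * S jz n)"
        using \<open>S q (Suc n) \<le> (2 * k) ^ Suc m * k * S jz n\<close> by (simp only: of_nat_le_iff)
      then show ?thesis by (simp only: of_nat_mult)
    qed
    then show ?thesis using k0 by (simp add: field_simps)
  qed
  have rn: "\<forall>i<k. \<exists>l. l \<in> Nb i" using row_nb[OF m1 prim] by simp
  have grow: "Suc n \<le> S q n" for n
    by (rule S_grow[OF rn q])
  show "\<exists>M. \<forall>n\<ge>M. ln (real (card (UNIV :: 'a set))) / real (S q (Suc n)) < \<epsilon>" if e: "\<epsilon> > 0" for \<epsilon>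
  proof -
    define c where "c = ln (real (card (UNIV :: 'a set)))"
    have c0: "0 \<le> c" unfolding c_def using cardA by simp
    obtain M :: nat where M: "c / \<epsilon> < real M" using reals_Archimedean2 by blast
    have "c / real (S q (Suc n)) < \<epsilon>" if "n \<ge> M" for n
    proof -
      have "real M < real (S q (Suc n))" using grow[of "Suc n"] that by simp
      then have "c / \<epsilon> < real (S q (Suc n))" using M by simp
      moreover have "0 < real (S q (Suc n))" by (rule S_rpos[OF q])
      ultimately show ?thesis using e c0 by (simp add: field_simps)
    qed
    then show ?thesis unfolding c_def by blast
  qed
  show "limsup (\<lambda>n. ereal (r j n)) = ereal (hh j)" if "j \<in> insert q (Nb q)" for j
  proof -
    have "j < k" using that q Nb_k[of j q] by auto
    then show ?thesis by (rule hh)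
  qed
  show "hh j \<le> hh q" if "j \<in> Nb q" for j using mx[OF Nb_k[OF that]] .
  show "0 \<le> hh q" by (rule H0)
qed

end

theorem theorem3p1:
  fixes k :: nat and K :: "nat mat" and X :: "(nat list \<Rightarrow> 'a::finite) set"
  assumes "K \<in> carrier_mat k k"
    and "\<forall>i < k. \<forall>j < k. K $$ (i, j) \<in> {0, 1}"
    and "is_tree_shift k K X"
    and "primitive_mat k K"
    and "i < k" and "j < k"
  shows "stem_entropy k K X i = stem_entropy k K X j"
proof -
  interpret T: tsetup k K X using assms(1,2) by unfold_locales
  obtain m where m1: "m \<ge> 1" and prim: "\<forall>j<k. \<forall>l<k. (K ^\<^sub>m m) $$ (j, l) > 0"
    using assms(4) unfolding primitive_mat_def by blast
  define hh where "hh j = real_of_ereal (limsup (\<lambda>n. ereal (T.r j n)))" for j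
  have hh: "limsup (\<lambda>n. ereal (T.r j n)) = ereal (hh j)" if j: "j < k" for j
  proof -
    have lo: "0 \<le> limsup (\<lambda>n. ereal (T.r j n))"
      by (rule le_Limsup) (auto simp: T.r_nonneg)
    have hi: "limsup (\<lambda>n. ereal (T.r j n)) \<le> ereal (ln (real (card (UNIV :: 'a set))))"
      by (rule Limsup_bounded) (auto simp: T.r_le[OF j])
    show ?thesis unfolding hh_def using lo hi
      by (cases "limsup (\<lambda>n. ereal (T.r j n))") auto
  qed
  have hh0: "0 \<le> hh j" if "j < k" for j
  proof -
    have "0 \<le> limsup (\<lambda>n. ereal (T.r j n))"
      by (rule le_Limsup) (auto simp: T.r_nonneg)
    then show ?thesis using hh[OF that] by simp
  qed
  have k0: "0 < k" using assms(5) by simp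
  define H where "H = Max (hh ` {..<k})"
  have Hin: "H \<in> hh ` {..<k}" unfolding H_def using k0 by (intro Max_in) auto
  then obtain q where q: "q < k" "hh q = H" by auto
  have Hge: "hh j \<le> H" if "j < k" for j unfolding H_def using that by (intro Max_ge) auto
  have propg: "\<forall>j<k. (K ^\<^sub>m t) $$ (q, j) > 0 \<longrightarrow> hh j = H" for t
  proof (induction t)
    case 0 then show ?case using carrier_matD[OF assms(1)] q by (simp split: if_splits)
  next
    case (Suc t)
    show ?case
    proof (intro allI impI)
      fix j assume j: "j < k" and pos: "(K ^\<^sub>m Suc t) $$ (q, j) > 0"
      have "(K ^\<^sub>m t * K) $$ (q, j) > 0" using pos by simp
      then obtain p where p: "p < k" "(K ^\<^sub>m t) $$ (q, p) > 0" "K $$ (p, j) > 0"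
        using T.mult_entry_pos[of "K ^\<^sub>m t" K q j] assms(1) q j by auto
      have hp: "hh p = H" using Suc.IH p(1) p(2) by simp
      have "hh j = hh p"
      proof (rule T.nb_max[OF m1 prim p(1) T.pos_Nb[OF p(1) j p(3)]])
        show "\<And>j. j < k \<Longrightarrow> limsup (\<lambda>n. ereal (T.r j n)) = ereal (hh j)" by (rule hh)
        show "\<And>j. j < k \<Longrightarrow> hh j \<le> hh p" using Hge hp by simp
        show "0 \<le> hh p" by (rule hh0[OF p(1)])
      qed
      then show "hh j = H" using hp by simp
    qed
  qed
  have "hh i = H" using propg[of m] prim q(1) assms(5) by simp
  moreover have "hh j = H" using propg[of m] prim q(1) assms(6) by simp
  ultimately show ?thesis using T.stem_eq hh[OF assms(5)] hh[OF assms(6)] by simp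
qed

end
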